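(* In the setting described in the context, fix $i\in[m]$, $b_{i0}\in\mathbb{R}$, $b_i\in\mathbb{R}^n$, and let $z_i^L=\min_{x\in P}\frac{b_{i0}+b_i^\top x}{a_{i0}+a_i^\top x}$, $z_i^U=\max_{x\in P}\frac{b_{i0}+b_i^\top x}{a_{i0}+a_i^\top x}$, $d_i^L=\min_{x\in P}(a_{i0}+a_i^\top x)>0$, $d_i^U=\max_{x\in P}(a_{i0}+a_i^\top x)$. Then every $(\rho,y,x)\in\mathcal{R}_{\mathrm{QP}}$, with $\zeta_i:=b_{i0}\rho^i+b_i^\top y^i$ and $\delta_i:=a_{i0}+a_i^\top x$, satisfies the McCormick inequalities obtained by relaxing $\zeta_i\delta_i=b_{i0}+b_i^\top x$: \[ \begin{aligned} b_{i0}+b_i^\top x&\ge z_i^L\delta_i+d_i^L\zeta_i-z_i^Ld_i^L, & b_{i0}+b_i^\top x&\ge z_i^U\delta_i+d_i^U\zeta_i-z_i^Ud_i^U,\\ b_{i0}+b_i^\top x&\le z_i^U\delta_i+d_i^L\zeta_i-z_i^Ud_i^L, & b_{i0}+b_i^\top x&\le z_i^L\delta_i+d_i^U\zeta_i-z_i^Ld_i^U. \end{aligned} \]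
   Context: Let $m,n,p$ be integers with $0\le p\le n$, $a_{i0}\in\mathbb{R}$, $a_i\in\mathbb{R}^n$ ($i\in[m]$), and let $\bar Cx\le\bar d$ be a linear system that includes $0\le x_j\le1$ for $j\in[p]$. Let $P=\{x\mid\bar Cx\le\bar d\}$, assumed nonempty and bounded, with $a_{i0}+a_i^\top x>0$ on $P$ for all $i$. $\mathcal{R}_{\mathrm{QP}}$ is the set of $(\rho,y,x)$, $\rho=(\rho^i)_{i\in[m]}$, $y=(y^i)_{i\in[m]}$, $y^i\in\mathbb{R}^n$, $x\in\mathbb{R}^n$, for which there exist $W^1,\dots,W^m\in\mathbb{R}^{n\times n}$ with, for all $i\in[m]$: $\bar CW^i\bar C^\top-\bar d(y^i)^\top\bar C^\top-\bar Cy^i\bar d^\top+\rho^i\bar d\bar d^\top\ge0$ (entrywise); $a_{i0}\rho^i+a_i^\top y^i=1$; $\rho^i\ge0$; $x_j=a_{i0}y^i_j+\sum_{k=1}^na_{ik}W^i_{jk}$ for $j\in[n]$; $\bar Cy^i\le\rho^i\bar d$; $W^i_{jj}=y^i_j$ for $j\in[p]$; and $\bar Cx\le\bar d$. *)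

theory Defs
  imports Complex_Main
begin

text \<open>Vectors in R^n are functions nat => real, only indices 0..n-1 matter (0-based).
  Matrix Cbar has r rows: C k j for k < r, j < n; dbar is d k for k < r.\<close>

definition matvec :: "nat \<Rightarrow> (nat \<Rightarrow> nat \<Rightarrow> real) \<Rightarrow> (nat \<Rightarrow> real) \<Rightarrow> nat \<Rightarrow> real" where
  "matvec n C v k = (\<Sum>j<n. C k j * v j)"

definition dotp :: "nat \<Rightarrow> (nat \<Rightarrow> real) \<Rightarrow> (nat \<Rightarrow> real) \<Rightarrow> real" where
  "dotp n u v = (\<Sum>j<n. u j * v j)"

definition polyP :: "nat \<Rightarrow> nat \<Rightarrow> (nat \<Rightarrow> nat \<Rightarrow> real) \<Rightarrow> (nat \<Rightarrow> real) \<Rightarrow> (nat \<Rightarrow> real) set" where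
  "polyP n r C d = {x. (\<forall>j\<ge>n. x j = 0) \<and> (\<forall>k<r. matvec n C x k \<le> d k)}"

text \<open>The system contains 0 <= x_j <= 1 for j in [p].\<close>
definition contains_box :: "nat \<Rightarrow> nat \<Rightarrow> nat \<Rightarrow> (nat \<Rightarrow> nat \<Rightarrow> real) \<Rightarrow> (nat \<Rightarrow> real) \<Rightarrow> bool" where
  "contains_box n p r C d \<longleftrightarrow>
     (\<forall>j<p. (\<exists>k<r. (\<forall>l<n. C k l = (if l = j then -1 else 0)) \<and> d k = 0)
          \<and> (\<exists>k<r. (\<forall>l<n. C k l = (if l = j then 1 else 0)) \<and> d k = 1))"

definition RQP ::
  "nat \<Rightarrow> nat \<Rightarrow> nat \<Rightarrow> nat \<Rightarrow> (nat \<Rightarrow> nat \<Rightarrow> real) \<Rightarrow> (nat \<Rightarrow> real)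
   \<Rightarrow> (nat \<Rightarrow> real) \<Rightarrow> (nat \<Rightarrow> nat \<Rightarrow> real)
   \<Rightarrow> ((nat \<Rightarrow> real) \<times> (nat \<Rightarrow> nat \<Rightarrow> real) \<times> (nat \<Rightarrow> real)) set" where
  "RQP m n p r C d a0 a = {(rho, y, x). \<exists>W :: nat \<Rightarrow> nat \<Rightarrow> nat \<Rightarrow> real.
     (\<forall>i<m.
        (\<forall>k<r. \<forall>l<r.
           (\<Sum>j<n. \<Sum>h<n. C k j * W i j h * C l h)
           - d k * matvec n C (y i) l - matvec n C (y i) k * d l
           + rho i * d k * d l \<ge> 0)
      \<and> a0 i * rho i + dotp n (a i) (y i) = 1
      \<and> rho i \<ge> 0
      \<and> (\<forall>j<n. x j = a0 i * y i j + (\<Sum>k<n. a i k * W i j k))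
      \<and> (\<forall>k<r. matvec n C (y i) k \<le> rho i * d k)
      \<and> (\<forall>j<p. W i j j = y i j))
     \<and> (\<forall>k<r. matvec n C x k \<le> d k)}"

end

theory Submission
  imports Defs
begin

lemma dotp_lin2: "dotp N u (\<lambda>j. w j - c * v j) = dotp N u w - c * dotp N u v"
  by (simp add: dotp_def sum_subtractf sum_distrib_left algebra_simps)

lemma dotp_lin1: "dotp N (\<lambda>j. p * al j - q * u j) w = p * dotp N al w - q * dotp N u w"
  by (simp add: dotp_def sum_subtractf sum_distrib_left algebra_simps)

lemma farkas_core:
  assumes "finite K"
  shows "\<not>(\<exists>lam. (\<forall>k\<in>K. lam k \<ge> 0) \<and> (\<forall>j<N. b j = (\<Sum>k\<in>K. lam k * A k j)))
     \<Longrightarrow> \<exists>v. (\<forall>k\<in>K. dotp N (A k) v \<ge> 0) \<and> dotp N b v < 0"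
  using assms
proof (induction K arbitrary: A b rule: finite_induct)
  case empty
  then obtain j0 where j0: "j0 < N" "b j0 \<noteq> 0" by auto
  have "b j0 * b j0 \<le> (\<Sum>j<N. b j * b j)"
    by (rule member_le_sum) (use j0 in auto)
  moreover have "b j0 * b j0 > 0" using j0 by (cases "b j0 > 0") (auto simp: mult_pos_pos mult_neg_neg)
  ultimately have "dotp N b (\<lambda>j. - b j) < 0" by (simp add: dotp_def sum_negf)
  then show ?case by auto
next
  case (insert a K)
  have nK: "\<not>(\<exists>lam. (\<forall>k\<in>K. lam k \<ge> 0) \<and> (\<forall>j<N. b j = (\<Sum>k\<in>K. lam k * A k j)))"
  proof
    assume "\<exists>lam. (\<forall>k\<in>K. lam k \<ge> 0) \<and> (\<forall>j<N. b j = (\<Sum>k\<in>K. lam k * A k j))"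
    then obtain lam where l: "\<forall>k\<in>K. lam k \<ge> 0" "\<forall>j<N. b j = (\<Sum>k\<in>K. lam k * A k j)" by blast
    have "\<forall>k\<in>K. (lam(a:=0)) k = lam k" using insert(2) by auto
    hence "\<forall>j<N. b j = (\<Sum>k\<in>insert a K. (lam(a:=0)) k * A k j)"
      using l(2) insert(1,2) by (simp add: sum.insert)
    moreover have "\<forall>k\<in>insert a K. (lam(a:=0)) k \<ge> 0" using l(1) by auto
    ultimately show False using insert(4) by blast
  qed
  from insert(3)[OF nK] obtain v where v: "\<forall>k\<in>K. dotp N (A k) v \<ge> 0" "dotp N b v < 0" by blast
  show ?case
  proof (cases "dotp N (A a) v \<ge> 0")
    case True then show ?thesis using v by auto
  next
    case False
    define av where "av = dotp N (A a) v"
    have av: "av < 0" using False av_def by simp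
    define A' where "A' = (\<lambda>k j. dotp N (A k) v * A a j - av * A k j)"
    define b' where "b' = (\<lambda>j. dotp N b v * A a j - av * b j)"
    have nK': "\<not>(\<exists>lam. (\<forall>k\<in>K. lam k \<ge> 0) \<and> (\<forall>j<N. b' j = (\<Sum>k\<in>K. lam k * A' k j)))"
    proof
      assume "\<exists>lam. (\<forall>k\<in>K. lam k \<ge> 0) \<and> (\<forall>j<N. b' j = (\<Sum>k\<in>K. lam k * A' k j))"
      then obtain lam where l: "\<forall>k\<in>K. lam k \<ge> 0" "\<forall>j<N. b' j = (\<Sum>k\<in>K. lam k * A' k j)" by blast
      define S where "S = (\<Sum>k\<in>K. lam k * dotp N (A k) v)"
      have S0: "S \<ge> 0" unfolding S_def using l(1) v(1) by (intro sum_nonneg) auto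
      define la where "la = (dotp N b v - S) / av"
      have la: "la \<ge> 0" unfolding la_def using S0 v(2) av
        by (intro divide_nonpos_neg) auto
      define lam' where "lam' = lam(a := la)"
      have eqK: "\<forall>k\<in>K. lam' k = lam k" using insert(2) lam'_def by auto
      have "\<forall>j<N. b j = (\<Sum>k\<in>insert a K. lam' k * A k j)"
      proof (intro allI impI)
        fix j assume j: "j < N"
        have "(\<Sum>k\<in>K. lam k * A' k j) = S * A a j - av * (\<Sum>k\<in>K. lam k * A k j)"
          unfolding A'_def S_def
          by (simp add: sum_subtractf sum_distrib_left sum_distrib_right algebra_simps)
        with l(2) j have "dotp N b v * A a j - av * b j = S * A a j - av * (\<Sum>k\<in>K. lam k * A k j)"
          by (simp add: b'_def)
        hence "b j = la * A a j + (\<Sum>k\<in>K. lam k * A k j)"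
          unfolding la_def using av by (simp add: field_simps)
        moreover have "(\<Sum>k\<in>K. lam' k * A k j) = (\<Sum>k\<in>K. lam k * A k j)"
          using eqK by (intro sum.cong) auto
        ultimately show "b j = (\<Sum>k\<in>insert a K. lam' k * A k j)"
          using insert(1,2) by (simp add: sum.insert lam'_def)
      qed
      moreover have "\<forall>k\<in>insert a K. lam' k \<ge> 0" using l(1) la eqK lam'_def by auto
      ultimately show False using insert(4) by blast
    qed
    from insert(3)[OF nK'] obtain w where w: "\<forall>k\<in>K. dotp N (A' k) w \<ge> 0" "dotp N b' w < 0" by blast
    define z where "z = (\<lambda>j. w j - (dotp N (A a) w / av) * v j)"
    have dz: "\<And>u. dotp N u z = dotp N u w - (dotp N (A a) w / av) * dotp N u v"
      unfolding z_def by (rule dotp_lin2)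
    have "\<forall>k\<in>insert a K. dotp N (A k) z \<ge> 0"
    proof
      fix k assume k: "k \<in> insert a K"
      show "dotp N (A k) z \<ge> 0"
      proof (cases "k = a")
        case True then show ?thesis using av by (simp add: dz av_def)
      next
        case False
        then have kK: "k \<in> K" using k by auto
        have "dotp N (A' k) w = dotp N (A k) v * dotp N (A a) w - av * dotp N (A k) w"
          unfolding A'_def by (rule dotp_lin1)
        hence "dotp N (A k) z = - dotp N (A' k) w / av"
          using av by (simp add: dz field_simps) (metis distrib_left)
        moreover have "- dotp N (A' k) w / av \<ge> 0" using w(1) kK av
          by (intro divide_nonpos_neg) auto
        ultimately show ?thesis by simp
      qed
    qed
    moreover
    have "dotp N b' w = dotp N b v * dotp N (A a) w - av * dotp N b w"
      unfolding b'_def by (rule dotp_lin1)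
    hence "dotp N b z = - dotp N b' w / av"
      using av by (simp add: dz field_simps) (metis distrib_left)
    moreover have "- dotp N b' w / av < 0" using w(2) av
      using divide_neg_neg[of "dotp N b' w" av] by simp
    ultimately show ?thesis by auto
  qed
qed


definition homA :: "nat \<Rightarrow> nat \<Rightarrow> (nat \<Rightarrow> real) \<Rightarrow> (nat \<Rightarrow> nat \<Rightarrow> real) \<Rightarrow> nat \<Rightarrow> nat \<Rightarrow> real" where
  "homA n R c G k = (if k < R then (\<lambda>j. if j < n then G k j else if j = n then c k else 0)
                     else (\<lambda>j. if j = n then 1 else 0))"

lemma dotp_cong1: "(\<forall>j<n. u j = u' j) \<Longrightarrow> dotp n u v = dotp n u' v"
  unfolding dotp_def by (intro sum.cong) auto

lemma dotp_cong2: "(\<forall>j<n. v j = v' j) \<Longrightarrow> dotp n u v = dotp n u v'"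
  unfolding dotp_def by (intro sum.cong) auto

lemma dotp_Suc: "dotp (Suc n) u v = dotp n u v + u n * v n"
  by (simp add: dotp_def)

lemma dotp_homA1: "k < R \<Longrightarrow> dotp (Suc n) (homA n R c G k) u = dotp n (G k) u + c k * u n"
  unfolding dotp_Suc by (simp add: homA_def, intro dotp_cong1) auto

lemma dotp_homA2: "dotp (Suc n) (homA n R c G R) u = u n"
  unfolding dotp_Suc by (simp add: homA_def dotp_def)

lemma dotp_div: "dotp n g (\<lambda>j. u j / t) = dotp n g u / t"
  by (simp add: dotp_def sum_divide_distrib)

lemma dotp_addsc: "dotp n g (\<lambda>j. v j + s * u j) = dotp n g v + s * dotp n g u"
  by (simp add: dotp_def sum.distrib sum_distrib_left algebra_simps)

lemma sum_homA:
  assumes "j \<le> n"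
  shows "(\<Sum>k<Suc R. lam k * homA n R c G k j) =
    (if j < n then (\<Sum>k<R. lam k * G k j) else (\<Sum>k<R. lam k * c k) + lam R)"
  using assms by (auto simp: homA_def intro!: sum.cong)

lemma farkas_aff:
  fixes R n :: nat
  assumes feas: "\<forall>k<R. c k + dotp n (G k) v0 \<ge> 0"
  and imp: "\<forall>v. (\<forall>k<R. c k + dotp n (G k) v \<ge> 0) \<longrightarrow> f0 + dotp n fv v \<ge> 0"
  shows "\<exists>lam0 lam. lam0 \<ge> 0 \<and> (\<forall>k<R. lam k \<ge> 0) \<and> f0 = lam0 + (\<Sum>k<R. lam k * c k)
           \<and> (\<forall>j<n. fv j = (\<Sum>k<R. lam k * G k j))"
proof -
  define b where "b = (\<lambda>j. if j < n then fv j else if j = n then f0 else 0)"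
  have db: "dotp (Suc n) b u = dotp n fv u + f0 * u n" for u
    unfolding dotp_Suc b_def by (simp, intro dotp_cong1) auto
  have H: "\<forall>k\<in>{..<Suc R}. dotp (Suc n) (homA n R c G k) u \<ge> 0 \<Longrightarrow> dotp (Suc n) b u \<ge> 0" for u
  proof -
    assume a: "\<forall>k\<in>{..<Suc R}. dotp (Suc n) (homA n R c G k) u \<ge> 0"
    have hk: "dotp n (G k) u + c k * u n \<ge> 0" if "k < R" for k
      using a[rule_format, of k] that dotp_homA1[OF that, of n c G u] by simp
    have t0: "u n \<ge> 0" using a[rule_format, of R] dotp_homA2[of n R c G u] by simp
    show ?thesis
    proof (cases "u n > 0")
      case True
      define t where "t = u n"
      have "c k + dotp n (G k) (\<lambda>j. u j / t) \<ge> 0" if "k < R" for k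
      proof -
        have "c k + dotp n (G k) (\<lambda>j. u j / t) = (dotp n (G k) u + c k * u n) / t"
          using True unfolding dotp_div t_def by (simp add: field_simps)
        then show ?thesis using hk[OF that] True t_def by simp
      qed
      then have "f0 + dotp n fv (\<lambda>j. u j / t) \<ge> 0" using imp by blast
      then have "(dotp n fv u + f0 * u n) / t \<ge> 0"
        using True unfolding dotp_div t_def by (simp add: field_simps)
      then show ?thesis using True t_def db by (simp add: zero_le_divide_iff)
    next
      case False
      then have un: "u n = 0" using t0 by simp
      have f00: "f0 + dotp n fv v0 \<ge> 0" using imp feas by blast
      show ?thesis
      proof (rule ccontr)
        assume "\<not> ?thesis"
        then have neg: "dotp n fv u < 0" using db un by simp
        define s where "s = (f0 + dotp n fv v0 + 1) / (- dotp n fv u)"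
        have s0: "s \<ge> 0" unfolding s_def using neg f00 by (simp add: divide_nonneg_neg)
        have "c k + dotp n (G k) (\<lambda>j. v0 j + s * u j) \<ge> 0" if "k < R" for k
          using feas[rule_format, OF that] hk[OF that] un s0 unfolding dotp_addsc by (simp, smt (verit) mult_nonneg_nonneg)
        then have "f0 + dotp n fv (\<lambda>j. v0 j + s * u j) \<ge> 0" using imp by blast
        moreover have "f0 + dotp n fv (\<lambda>j. v0 j + s * u j) = -1"
          unfolding dotp_addsc s_def using neg by (simp add: field_simps)
        ultimately show False by simp
      qed
    qed
  qed
  have "\<exists>lam. (\<forall>k\<in>{..<Suc R}. lam k \<ge> 0) \<and> (\<forall>j<Suc n. b j = (\<Sum>k\<in>{..<Suc R}. lam k * homA n R c G k j))"
  proof (rule ccontr)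
    assume "\<not> ?thesis"
    from farkas_core[OF _ this] obtain u where
      "\<forall>k\<in>{..<Suc R}. dotp (Suc n) (homA n R c G k) u \<ge> 0" "dotp (Suc n) b u < 0" by auto
    with H show False by force
  qed
  then obtain lam where l: "\<forall>k<Suc R. lam k \<ge> 0" "\<forall>j<Suc n. b j = (\<Sum>k<Suc R. lam k * homA n R c G k j)"
    by auto
  have "\<forall>j<n. fv j = (\<Sum>k<R. lam k * G k j)"
  proof (intro allI impI)
    fix j assume "j < n"
    then show "fv j = (\<Sum>k<R. lam k * G k j)" using l(2)[rule_format, of j] sum_homA[of j n lam R c G] b_def by simp
  qed
  moreover have "f0 = lam R + (\<Sum>k<R. lam k * c k)"
    using l(2) sum_homA[of n n lam R c G] b_def by auto
  ultimately show ?thesis using l(1) by (intro exI[of _ "lam R"] exI[of _ lam]) auto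
qed

lemma farkas_infeas:
  fixes R n :: nat
  assumes "\<not>(\<exists>v. \<forall>k<R. c k + dotp n (G k) v \<ge> 0)"
  shows "\<exists>lam. (\<forall>k<R. lam k \<ge> 0) \<and> (\<Sum>k<R. lam k * c k) < 0 \<and> (\<forall>j<n. (\<Sum>k<R. lam k * G k j) = 0)"
proof -
  define b where "b = (\<lambda>j. if j = n then -1 else (0::real))"
  have db: "dotp (Suc n) b u = - u n" for u
    unfolding dotp_Suc b_def by (simp add: dotp_def)
  have H: "\<forall>k\<in>{..<Suc R}. dotp (Suc n) (homA n R c G k) u \<ge> 0 \<Longrightarrow> dotp (Suc n) b u \<ge> 0" for u
  proof -
    assume a: "\<forall>k\<in>{..<Suc R}. dotp (Suc n) (homA n R c G k) u \<ge> 0"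
    have hk: "dotp n (G k) u + c k * u n \<ge> 0" if "k < R" for k
      using a[rule_format, of k] that dotp_homA1[OF that, of n c G u] by simp
    show ?thesis
    proof (cases "u n > 0")
      case True
      define t where "t = u n"
      have "c k + dotp n (G k) (\<lambda>j. u j / t) \<ge> 0" if "k < R" for k
      proof -
        have "c k + dotp n (G k) (\<lambda>j. u j / t) = (dotp n (G k) u + c k * u n) / t"
          using True unfolding dotp_div t_def by (simp add: field_simps)
        then show ?thesis using hk[OF that] True t_def by simp
      qed
      then show ?thesis using assms by blast
    next
      case False then show ?thesis using db by simp
    qed
  qed
  have "\<exists>lam. (\<forall>k\<in>{..<Suc R}. lam k \<ge> 0) \<and> (\<forall>j<Suc n. b j = (\<Sum>k\<in>{..<Suc R}. lam k * homA n R c G k j))"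
  proof (rule ccontr)
    assume "\<not> ?thesis"
    from farkas_core[OF _ this] obtain u where
      "\<forall>k\<in>{..<Suc R}. dotp (Suc n) (homA n R c G k) u \<ge> 0" "dotp (Suc n) b u < 0" by auto
    with H show False by force
  qed
  then obtain lam where l: "\<forall>k<Suc R. lam k \<ge> 0" "\<forall>j<Suc n. b j = (\<Sum>k<Suc R. lam k * homA n R c G k j)"
    by auto
  have "\<forall>j<n. (\<Sum>k<R. lam k * G k j) = 0"
  proof (intro allI impI)
    fix j assume "j < n"
    then show "(\<Sum>k<R. lam k * G k j) = 0" using l(2)[rule_format, of j] sum_homA[of j n lam R c G] b_def by simp
  qed
  moreover have "-1 = (\<Sum>k<R. lam k * c k) + lam R"
    using l(2) sum_homA[of n n lam R c G] b_def by auto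
  moreover have "lam R \<ge> 0" using l(1) by auto
  ultimately show ?thesis using l(1) by (intro exI[of _ lam]) auto
qed


definition Eform :: "nat \<Rightarrow> real \<Rightarrow> (nat \<Rightarrow> real) \<Rightarrow> (nat \<Rightarrow> nat \<Rightarrow> real) \<Rightarrow> real \<Rightarrow> (nat \<Rightarrow> real) \<Rightarrow> real \<Rightarrow> (nat \<Rightarrow> real) \<Rightarrow> real" where
  "Eform n rho y W f0 fv g0 gv = f0*g0*rho + f0*dotp n gv y + g0*dotp n fv y + (\<Sum>j<n. \<Sum>h<n. fv j * W j h * gv h)"

lemma sum_lincomb:
  fixes fv M lam :: "nat \<Rightarrow> real" and C :: "nat \<Rightarrow> nat \<Rightarrow> real"
  assumes "\<forall>j<n. fv j = (\<Sum>k<r. lam k * (- C k j))"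
  shows "(\<Sum>j<n. fv j * M j) = - (\<Sum>k<r. lam k * (\<Sum>j<n. C k j * M j))"
proof -
  have "(\<Sum>j<n. fv j * M j) = (\<Sum>j<n. (\<Sum>k<r. lam k * (- C k j)) * M j)"
    using assms by (intro sum.cong) auto
  also have "\<dots> = (\<Sum>j<n. \<Sum>k<r. - (lam k * (C k j * M j)))"
    by (intro sum.cong refl) (simp add: sum_distrib_right mult.assoc)
  also have "\<dots> = (\<Sum>k<r. \<Sum>j<n. - (lam k * (C k j * M j)))"
    by (rule sum.swap)
  also have "\<dots> = - (\<Sum>k<r. lam k * (\<Sum>j<n. C k j * M j))"
    by (simp add: sum_negf sum_distrib_left)
  finally show ?thesis .
qed

lemma E_nonneg:
  fixes rho :: real and y :: "nat \<Rightarrow> real" and W :: "nat \<Rightarrow> nat \<Rightarrow> real"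
  assumes R: "\<forall>k<r. \<forall>l<r. (\<Sum>j<n. \<Sum>h<n. C k j * W j h * C l h) - d k * matvec n C y l
                 - matvec n C y k * d l + rho * d k * d l \<ge> 0"
  and rho: "rho \<ge> 0" and s: "\<forall>k<r. matvec n C y k \<le> rho * d k"
  and l0: "lam0 \<ge> 0" and l1: "\<forall>k<r. lam k \<ge> 0" and l2: "f0 = lam0 + (\<Sum>k<r. lam k * d k)"
  and l3: "\<forall>j<n. fv j = (\<Sum>k<r. lam k * (- C k j))"
  and m0: "mu0 \<ge> 0" and m1: "\<forall>k<r. mu k \<ge> 0" and m2: "g0 = mu0 + (\<Sum>k<r. mu k * d k)"
  and m3: "\<forall>j<n. gv j = (\<Sum>k<r. mu k * (- C k j))"
  shows "Eform n rho y W f0 fv g0 gv \<ge> 0"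
proof -
  define Lin where "Lin = g0*rho + dotp n gv y"
  define M where "M = (\<lambda>j. g0 * y j + (\<Sum>h<n. W j h * gv h))"
  define T where "T = (\<lambda>k. d k * Lin - (\<Sum>j<n. C k j * M j))"
  have e1: "Eform n rho y W f0 fv g0 gv = f0*Lin + (\<Sum>j<n. fv j * M j)"
    unfolding Eform_def Lin_def M_def dotp_def
    by (simp add: sum.distrib sum_distrib_left distrib_left algebra_simps)
  have e2: "f0*Lin + (\<Sum>j<n. fv j * M j) = lam0 * Lin + (\<Sum>k<r. lam k * T k)"
    unfolding sum_lincomb[OF l3] l2 T_def
    by (simp add: sum_subtractf sum_distrib_left sum_distrib_right algebra_simps)
  have dgy: "dotp n gv y = - (\<Sum>l<r. mu l * matvec n C y l)"
    unfolding dotp_def matvec_def using sum_lincomb[OF m3, of y] by simp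
  have "Lin = mu0 * rho + (\<Sum>l<r. mu l * (rho * d l - matvec n C y l))"
    unfolding Lin_def dgy m2
    by (simp add: sum_subtractf sum_distrib_left sum_distrib_right algebra_simps)
  moreover have "(\<Sum>l<r. mu l * (rho * d l - matvec n C y l)) \<ge> 0"
    using m1 s by (intro sum_nonneg mult_nonneg_nonneg) (auto simp: algebra_simps)
  ultimately have Lin0: "Lin \<ge> 0" using m0 rho by simp
  have T0: "T k \<ge> 0" if k: "k < r" for k
  proof -
    define sk where "sk = d k * rho - matvec n C y k"
    define N where "N = (\<lambda>h. d k * y h - (\<Sum>j<n. C k j * W j h))"
    have t1: "T k = g0 * sk + (\<Sum>h<n. gv h * N h)"
    proof -
      have "(\<Sum>j<n. C k j * M j) = g0 * matvec n C y k + (\<Sum>j<n. \<Sum>h<n. C k j * W j h * gv h)"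
        unfolding M_def matvec_def
        by (simp add: sum.distrib sum_distrib_left algebra_simps)
      also have "(\<Sum>j<n. \<Sum>h<n. C k j * W j h * gv h) = (\<Sum>h<n. \<Sum>j<n. C k j * W j h * gv h)"
        by (rule sum.swap)
      finally have "(\<Sum>j<n. C k j * M j) = g0 * matvec n C y k + (\<Sum>h<n. \<Sum>j<n. C k j * W j h * gv h)" .
      then show ?thesis unfolding T_def Lin_def sk_def N_def dotp_def
        by (simp add: sum_subtractf sum_distrib_left sum_distrib_right algebra_simps)
    qed
    have t2: "(\<Sum>h<n. gv h * N h) = - (\<Sum>l<r. mu l * (\<Sum>h<n. C l h * N h))"
      using sum_lincomb[OF m3, of N] by simp
    have t3: "d l * sk - (\<Sum>h<n. C l h * N h) =
       (\<Sum>j<n. \<Sum>h<n. C k j * W j h * C l h) - d k * matvec n C y l - matvec n C y k * d l + rho * d k * d l" for l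
    proof -
      have "(\<Sum>h<n. C l h * N h) = d k * matvec n C y l - (\<Sum>h<n. \<Sum>j<n. C k j * W j h * C l h)"
        unfolding N_def matvec_def
        by (simp add: sum_subtractf sum_distrib_left algebra_simps)
      also have "(\<Sum>h<n. \<Sum>j<n. C k j * W j h * C l h) = (\<Sum>j<n. \<Sum>h<n. C k j * W j h * C l h)"
        by (rule sum.swap)
      finally show ?thesis unfolding sk_def by (simp add: algebra_simps)
    qed
    have "T k = mu0 * sk + (\<Sum>l<r. mu l * (d l * sk - (\<Sum>h<n. C l h * N h)))"
      unfolding t1 t2 m2
      by (simp add: sum_subtractf sum_distrib_left sum_distrib_right algebra_simps)
    also have "\<dots> \<ge> 0"
    proof -
      have "matvec n C y k \<le> rho * d k" using s k by auto
      then have "sk \<ge> 0" unfolding sk_def by (simp add: mult.commute)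
      moreover have "(\<Sum>l<r. mu l * (d l * sk - (\<Sum>h<n. C l h * N h))) \<ge> 0"
        unfolding t3 using m1 R k by (intro sum_nonneg mult_nonneg_nonneg) auto
      ultimately show ?thesis using m0 by simp
    qed
    finally show ?thesis .
  qed
  have "(\<Sum>k<r. lam k * T k) \<ge> 0" using l1 T0 by (intro sum_nonneg mult_nonneg_nonneg) auto
  then show ?thesis using e1 e2 l0 Lin0 by simp
qed


lemma Eform_ident:
  assumes xf: "\<forall>j<n. x j = a0 * y j + (\<Sum>k<n. a k * W j k)"
  and nrm: "a0 * rho + dotp n a y = 1"
  shows "Eform n rho y W f0 fv (sg*(a0 - c)) (\<lambda>j. sg * a j) =
         sg * (f0 + dotp n fv x - c*(f0*rho + dotp n fv y))"
proof -
  have q: "(\<Sum>j<n. \<Sum>h<n. fv j * W j h * (sg * a h)) = sg * (dotp n fv x - a0 * dotp n fv y)"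
  proof -
    have "(\<Sum>j<n. \<Sum>h<n. fv j * W j h * (sg * a h)) = (\<Sum>j<n. sg * (fv j * (x j - a0 * y j)))"
    proof (intro sum.cong refl)
      fix j assume "j \<in> {..<n}"
      then have "x j - a0 * y j = (\<Sum>k<n. a k * W j k)" using xf by auto
      then show "(\<Sum>h<n. fv j * W j h * (sg * a h)) = sg * (fv j * (x j - a0 * y j))"
        by (simp add: sum_distrib_left algebra_simps)
    qed
    then show ?thesis by (simp add: dotp_def sum_distrib_left sum_subtractf algebra_simps)
  qed
  have dy: "dotp n a y = 1 - a0 * rho" using nrm by simp
  have "dotp n (\<lambda>j. sg * a j) y = sg * dotp n a y"
    by (simp add: dotp_def sum_distrib_left mult.assoc)
  then have gvy: "dotp n (\<lambda>j. sg * a j) y = sg * (1 - a0 * rho)" using dy by simp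
  show ?thesis unfolding Eform_def q gvy by (simp add: algebra_simps)
qed

lemma dotp_abs_bound:
  assumes "\<forall>j<n. \<bar>v j\<bar> \<le> B"
  shows "\<bar>dotp n u v\<bar> \<le> (\<Sum>j<n. \<bar>u j\<bar>) * B"
proof -
  have "\<bar>dotp n u v\<bar> \<le> (\<Sum>j<n. \<bar>u j * v j\<bar>)" unfolding dotp_def by (rule sum_abs)
  also have "\<dots> \<le> (\<Sum>j<n. \<bar>u j\<bar> * B)"
    using assms by (intro sum_mono) (auto simp: abs_mult intro: mult_left_mono)
  finally show ?thesis by (simp add: sum_distrib_right)
qed

lemma dotp_scale_diff: "dotp n (\<lambda>j. t * (b j - z * a j)) v = t * (dotp n b v - z * dotp n a v)"
  by (simp add: dotp_def sum_distrib_left sum_subtractf algebra_simps)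

lemma matvec_dotp: "dotp n (\<lambda>j. - C k j) v = - matvec n C v k"
  by (simp add: dotp_def matvec_def sum_negf)

theorem proposition6:
  fixes m n p r :: nat
    and C :: "nat \<Rightarrow> nat \<Rightarrow> real" and d :: "nat \<Rightarrow> real"
    and a0 :: "nat \<Rightarrow> real" and a :: "nat \<Rightarrow> nat \<Rightarrow> real"
    and i :: nat and bi0 :: real and bi :: "nat \<Rightarrow> real"
    and rho :: "nat \<Rightarrow> real" and y :: "nat \<Rightarrow> nat \<Rightarrow> real" and x :: "nat \<Rightarrow> real"
    and zL zU dL dU :: real
  assumes "p \<le> n"
    and "contains_box n p r C d"
    and "polyP n r C d \<noteq> {}"
    and "\<exists>B. \<forall>v\<in>polyP n r C d. \<forall>j<n. \<bar>v j\<bar> \<le> B"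
    and "\<forall>l<m. \<forall>v\<in>polyP n r C d. a0 l + dotp n (a l) v > 0"
    and "i < m"
    and "zL = (INF v\<in>polyP n r C d. (bi0 + dotp n bi v) / (a0 i + dotp n (a i) v))"
    and "zU = (SUP v\<in>polyP n r C d. (bi0 + dotp n bi v) / (a0 i + dotp n (a i) v))"
    and "dL = (INF v\<in>polyP n r C d. a0 i + dotp n (a i) v)"
    and "dU = (SUP v\<in>polyP n r C d. a0 i + dotp n (a i) v)"
    and "(rho, y, x) \<in> RQP m n p r C d a0 a"
  shows "let zeta = bi0 * rho i + dotp n bi (y i);
             delta = a0 i + dotp n (a i) x;
             num = bi0 + dotp n bi x
         in num \<ge> zL * delta + dL * zeta - zL * dL
          \<and> num \<ge> zU * delta + dU * zeta - zU * dU
          \<and> num \<le> zU * delta + dL * zeta - zU * dL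
          \<and> num \<le> zL * delta + dU * zeta - zL * dU"
proof -
  define P where "P = polyP n r C d"
  define dl where "dl = (\<lambda>v. a0 i + dotp n (a i) v)"
  define nm where "nm = (\<lambda>v. bi0 + dotp n bi v)"
  define ze where "ze = (\<lambda>v::nat\<Rightarrow>real. \<lambda>j. if j < n then v j else 0)"
  have ze_dotp: "dotp n u (ze v) = dotp n u v" for u v
    unfolding ze_def by (intro dotp_cong2) auto
  have ze_mv: "matvec n C (ze v) k = matvec n C v k" for v k
    unfolding ze_def matvec_def by (intro sum.cong) auto
  have zeP: "(\<forall>k<r. d k + dotp n (\<lambda>j. - C k j) v \<ge> 0) \<Longrightarrow> ze v \<in> P" for v
    unfolding P_def polyP_def using ze_mv by (auto simp: matvec_dotp ze_def)
  have Pmv: "v \<in> P \<Longrightarrow> \<forall>k<r. d k + dotp n (\<lambda>j. - C k j) v \<ge> 0" for v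
    unfolding P_def polyP_def by (auto simp: matvec_dotp)
  obtain v0 where v0: "v0 \<in> P" using assms(3) P_def by auto
  obtain B where B: "\<forall>v\<in>P. \<forall>j<n. \<bar>v j\<bar> \<le> B" using assms(4) P_def by auto
  have dpos: "\<forall>v\<in>P. dl v > 0" using assms(5,6) P_def dl_def by auto
  from assms(11) obtain W where W: "\<forall>i<m.
        (\<forall>k<r. \<forall>l<r.
           (\<Sum>j<n. \<Sum>h<n. C k j * W i j h * C l h)
           - d k * matvec n C (y i) l - matvec n C (y i) k * d l
           + rho i * d k * d l \<ge> 0)
      \<and> a0 i * rho i + dotp n (a i) (y i) = 1
      \<and> rho i \<ge> 0
      \<and> (\<forall>j<n. x j = a0 i * y i j + (\<Sum>k<n. a i k * W i j k))
      \<and> (\<forall>k<r. matvec n C (y i) k \<le> rho i * d k)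
      \<and> (\<forall>j<p. W i j j = y i j)"
    unfolding RQP_def by auto
  note Wi = W[rule_format, OF assms(6)]
  obtain e where e: "e > 0" "\<forall>v\<in>P. dl v \<ge> e"
  proof -
    define c where "c = (\<lambda>k. if k < r then d k else - a0 i)"
    define G where "G = (\<lambda>k j. if k < r then - C k j else - a i j)"
    have "\<not>(\<exists>v. \<forall>k<Suc r. c k + dotp n (G k) v \<ge> 0)"
    proof
      assume "\<exists>v. \<forall>k<Suc r. c k + dotp n (G k) v \<ge> 0"
      then obtain v where v: "\<forall>k<Suc r. c k + dotp n (G k) v \<ge> 0" by blast
      have "\<forall>k<r. d k + dotp n (\<lambda>j. - C k j) v \<ge> 0"
      proof (intro allI impI)
        fix k assume k: "k < r"
        have "G k = (\<lambda>j. - C k j)" using k G_def by auto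
        then show "d k + dotp n (\<lambda>j. - C k j) v \<ge> 0" using v[rule_format, of k] k c_def by simp
      qed
      then have "ze v \<in> P" by (rule zeP)
      then have "dl (ze v) > 0" using dpos by auto
      moreover have "G r = (\<lambda>j. - a i j)" using G_def by auto
      then have "- a0 i + dotp n (\<lambda>j. - a i j) v \<ge> 0" using v[rule_format, of r] c_def by simp
      then have "dl v \<le> 0" unfolding dl_def by (simp add: dotp_def sum_negf)
      ultimately show False unfolding dl_def by (simp add: ze_dotp)
    qed
    from farkas_infeas[OF this] obtain lam where lam: "\<forall>k<Suc r. lam k \<ge> 0"
      "(\<Sum>k<Suc r. lam k * c k) < 0" "\<forall>j<n. (\<Sum>k<Suc r. lam k * G k j) = 0" by blast
    define L where "L = lam r"
    define S where "S = (\<Sum>k<r. lam k * d k)"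
    have "(\<Sum>k<r. lam k * c k) = S" unfolding S_def c_def by (intro sum.cong) auto
    then have Sc: "S - L * a0 i < 0" using lam(2) unfolding L_def c_def by simp
    have fvL: "\<forall>j<n. L * a i j = (\<Sum>k<r. lam k * (- C k j))"
    proof (intro allI impI)
      fix j assume "j < n"
      then have "(\<Sum>k<r. lam k * G k j) + lam r * G r j = 0" using lam(3) by simp
      moreover have "(\<Sum>k<r. lam k * G k j) = (\<Sum>k<r. lam k * (- C k j))"
        unfolding G_def by (intro sum.cong) auto
      ultimately show "L * a i j = (\<Sum>k<r. lam k * (- C k j))" unfolding L_def G_def by simp
    qed
    have low: "L * dl v \<ge> L * a0 i - S" if v: "v \<in> P" for v
    proof -
      have "(\<Sum>j<n. L * a i j * v j) = - (\<Sum>k<r. lam k * (\<Sum>j<n. C k j * v j))"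
        by (rule sum_lincomb[OF fvL])
      then have eq: "L * dotp n (a i) v = - (\<Sum>k<r. lam k * matvec n C v k)"
        by (simp add: dotp_def matvec_def sum_distrib_left mult.assoc)
      have "(\<Sum>k<r. lam k * (d k - matvec n C v k)) \<ge> 0"
        using lam(1) v unfolding P_def polyP_def by (intro sum_nonneg mult_nonneg_nonneg) auto
      then have "S + L * dotp n (a i) v \<ge> 0" unfolding eq S_def
        by (simp add: sum_subtractf algebra_simps)
      then show ?thesis unfolding dl_def by (simp add: algebra_simps)
    qed
    have Lpos: "L > 0"
    proof (rule ccontr)
      assume "\<not> L > 0"
      moreover have "L \<ge> 0" using lam(1) L_def by auto
      ultimately have "L = 0" by simp
      then show False using low[OF v0] Sc by simp
    qed
    show ?thesis
    proof (rule that[of "(L * a0 i - S) / L"])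
      show "(L * a0 i - S) / L > 0" using Sc Lpos by simp
      show "\<forall>v\<in>P. dl v \<ge> (L * a0 i - S) / L"
        using low Lpos by (auto simp: divide_le_eq mult.commute)
    qed
  qed
  define Mb where "Mb = \<bar>bi0\<bar> + (\<Sum>j<n. \<bar>bi j\<bar>) * B"
  define Ma where "Ma = \<bar>a0 i\<bar> + (\<Sum>j<n. \<bar>a i j\<bar>) * B"
  have nmb: "\<bar>nm v\<bar> \<le> Mb" if "v \<in> P" for v
    unfolding nm_def Mb_def using dotp_abs_bound[of n v B bi] B that
    by (smt (verit))
  have dlb: "dl v \<le> Ma" if "v \<in> P" for v
    unfolding dl_def Ma_def using dotp_abs_bound[of n v B "a i"] B that
    by (smt (verit))
  have Mb0: "Mb \<ge> 0" using nmb[OF v0] by simp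
  have ratb: "\<bar>nm v / dl v\<bar> \<le> Mb / e" if v: "v \<in> P" for v
  proof -
    have "\<bar>nm v / dl v\<bar> = \<bar>nm v\<bar> / dl v" using dpos v by (simp add: abs_div_pos)
    also have "\<dots> \<le> Mb / e" using e v nmb[OF v] Mb0
      by (intro frac_le) auto
    finally show ?thesis .
  qed
  have zLdef: "zL = (INF v\<in>P. nm v / dl v)" using assms(7) P_def nm_def dl_def by simp
  have zUdef: "zU = (SUP v\<in>P. nm v / dl v)" using assms(8) P_def nm_def dl_def by simp
  have dLdef: "dL = (INF v\<in>P. dl v)" using assms(9) P_def dl_def by simp
  have dUdef: "dU = (SUP v\<in>P. dl v)" using assms(10) P_def dl_def by simp
  have bb1: "bdd_below ((\<lambda>v. nm v / dl v) ` P)"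
  proof (rule bdd_belowI2[where m="- (Mb / e)"])
    fix v assume "v \<in> P"
    from ratb[OF this] show "- (Mb / e) \<le> nm v / dl v" by linarith
  qed
  have bb2: "bdd_above ((\<lambda>v. nm v / dl v) ` P)"
  proof (rule bdd_aboveI2)
    fix v assume "v \<in> P"
    from ratb[OF this] show "nm v / dl v \<le> Mb / e" by linarith
  qed
  have bb3: "bdd_below (dl ` P)"
    by (rule bdd_belowI2[where m=0]) (use dpos in force)
  have bb4: "bdd_above (dl ` P)"
    by (rule bdd_aboveI2[where M=Ma]) (use dlb in force)
  have zLv: "zL \<le> nm v / dl v" if "v \<in> P" for v
    unfolding zLdef by (rule cINF_lower[OF bb1 that])
  have zUv: "nm v / dl v \<le> zU" if "v \<in> P" for v
    unfolding zUdef by (rule cSUP_upper[OF that bb2])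
  have dLv: "dL \<le> dl v" if "v \<in> P" for v
    unfolding dLdef by (rule cINF_lower[OF bb3 that])
  have dUv: "dl v \<le> dU" if "v \<in> P" for v
    unfolding dUdef by (rule cSUP_upper[OF that bb4])
  have fzL: "nm v - zL * dl v \<ge> 0" if "v \<in> P" for v
  proof -
    have "zL * dl v \<le> nm v / dl v * dl v" using zLv[OF that] dpos that
      by (intro mult_right_mono) auto
    then show ?thesis using dpos that by (force split: if_splits)
  qed
  have fzU: "zU * dl v - nm v \<ge> 0" if "v \<in> P" for v
  proof -
    have "nm v / dl v * dl v \<le> zU * dl v" using zUv[OF that] dpos that
      by (intro mult_right_mono) auto
    then show ?thesis using dpos that by (force split: if_splits)
  qed
  have farkP: "\<exists>lam0 lam. lam0 \<ge> 0 \<and> (\<forall>k<r. lam k \<ge> 0) \<and> f0 = lam0 + (\<Sum>k<r. lam k * d k)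
           \<and> (\<forall>j<n. fv j = (\<Sum>k<r. lam k * (- C k j)))"
    if h: "\<forall>v\<in>P. f0 + dotp n fv v \<ge> 0" for f0 fv
  proof -
    have "\<forall>v. (\<forall>k<r. d k + dotp n (\<lambda>j. - C k j) v \<ge> 0) \<longrightarrow> f0 + dotp n fv v \<ge> 0"
    proof (intro allI impI)
      fix v assume "\<forall>k<r. d k + dotp n (\<lambda>j. - C k j) v \<ge> 0"
      then have "ze v \<in> P" by (rule zeP)
      then show "f0 + dotp n fv v \<ge> 0" using h ze_dotp by metis
    qed
    from farkas_aff[OF Pmv[OF v0] this] show ?thesis .
  qed
  define zeta where "zeta = bi0 * rho i + dotp n bi (y i)"
  have gen: "sg * tau * (nm x - z * dl x - c * zeta + c * z) \<ge> 0"
    if hg: "\<forall>v\<in>P. sg * (dl v - c) \<ge> 0" and hf: "\<forall>v\<in>P. tau * (nm v - z * dl v) \<ge> 0"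
    for sg tau c z
  proof -
    define f0 where "f0 = tau * (bi0 - z * a0 i)"
    define fv where "fv = (\<lambda>j. tau * (bi j - z * a i j))"
    define g0 where "g0 = sg * (a0 i - c)"
    define gv where "gv = (\<lambda>j. sg * a i j)"
    have fe: "f0 + dotp n fv v = tau * (nm v - z * dl v)" for v
      unfolding f0_def fv_def dotp_scale_diff nm_def dl_def by (simp add: algebra_simps)
    have ge: "g0 + dotp n gv v = sg * (dl v - c)" for v
      unfolding g0_def gv_def dl_def by (simp add: dotp_def sum_distrib_left algebra_simps)
    obtain lam0 lam where L: "lam0 \<ge> 0" "\<forall>k<r. lam k \<ge> 0" "f0 = lam0 + (\<Sum>k<r. lam k * d k)"
           "\<forall>j<n. fv j = (\<Sum>k<r. lam k * (- C k j))"
      using farkP[of f0 fv] hf fe by auto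
    obtain mu0 mu where M: "mu0 \<ge> 0" "\<forall>k<r. mu k \<ge> 0" "g0 = mu0 + (\<Sum>k<r. mu k * d k)"
           "\<forall>j<n. gv j = (\<Sum>k<r. mu k * (- C k j))"
      using farkP[of g0 gv] hg ge by auto
    have E0: "Eform n (rho i) (y i) (W i) f0 fv g0 gv \<ge> 0"
      using Wi by (intro E_nonneg[OF _ _ _ L M]) auto
    have "Eform n (rho i) (y i) (W i) f0 fv g0 gv =
          sg * (f0 + dotp n fv x - c*(f0*rho i + dotp n fv (y i)))"
      unfolding g0_def gv_def using Wi by (intro Eform_ident) auto
    also have "f0*rho i + dotp n fv (y i) = tau * (zeta - z)"
    proof -
      have "f0*rho i + dotp n fv (y i) = tau * (zeta - z * (a0 i * rho i + dotp n (a i) (y i)))"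
        unfolding f0_def fv_def dotp_scale_diff zeta_def by (simp add: algebra_simps)
      then show ?thesis using Wi by simp
    qed
    finally show ?thesis using E0 fe[of x] by (simp add: algebra_simps)
  qed
  have g1: "\<forall>v\<in>P. 1 * (dl v - dL) \<ge> 0" using dLv by simp
  have g2: "\<forall>v\<in>P. (-1) * (dl v - dU) \<ge> 0" using dUv by simp
  have f1: "\<forall>v\<in>P. 1 * (nm v - zL * dl v) \<ge> 0" using fzL by simp
  have f2: "\<forall>v\<in>P. (-1) * (nm v - zU * dl v) \<ge> 0" using fzU by simp
  have c1: "nm x - zL * dl x - dL * zeta + dL * zL \<ge> 0" using gen[OF g1 f1] by simp
  have c2: "nm x - zU * dl x - dU * zeta + dU * zU \<ge> 0" using gen[OF g2 f2] by simp
  have c3: "- (nm x - zU * dl x - dL * zeta + dL * zU) \<ge> 0" using gen[OF g1 f2] by simp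
  have c4: "- (nm x - zL * dl x - dU * zeta + dU * zL) \<ge> 0" using gen[OF g2 f1] by simp
  show ?thesis unfolding Let_def using c1 c2 c3 c4 unfolding nm_def dl_def zeta_def
    by (simp add: algebra_simps)
qed

end
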